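(* Let $\phi^c$ map a nonempty face $F$ of $V^c_O$ to $\phi^c(F)=\bigcup\{\mathrm{supp}(\lambda): \lambda\in\Upsilon_1,\ F\subseteq K_\lambda\}$. Then $\phi^c(F)$ is a coherent acyclic orientation of a cut subgraph of $G$, and $\phi^c$ is injective and order-preserving (if $F_1\subseteq F_2$ then $\phi^c(F_2)\subseteq\phi^c(F_1)$). The vertices of $V^c_O$ are in one-to-one correspondence with the acyclic orientations of $G$ (with loops deleted): each acyclic orientation $D$ defines a unique vertex $\nu^D$ of $V^c_O$, and every vertex is of this form. Moreover, each face $F$ is the convex hull of the vertices $\nu^D$ with $D$ ranging over the acyclic orientations of $G$ containing $\phi^c(F)$.
   Context: $G=(V,E)$ is a finite connected graph; each edge gives oriented edges $e,\bar e$. Real $1$-cochains are $x$ on oriented edges with $x_{\bar e}=-x_e$, $\langle x,y\rangle=\sum_{e\in E}x_ey_e$, $q(x)=\langle x,x\rangle$. For $f:V\to\mathbb R$, $d(f)(e)=f(\text{head}(e))-f(\text{tail}(e))$; $K=d(\mathbb R^V)$ and $L=d(\mathbb Z^V)$. $V^c_O=\{x\in K: q(x)\le q(x-\mu)\ \forall\mu\in L\}$. $\mathrm{supp}(x)=\{e: x_e>0\}$. $\chi_C$ is the characteristic function of $C$; if $G[C]$ has $k$ and $G[V\setminus C]$ has $r$ connected components, $\kappa(C,V\setminus C)=k+r-1$; $\Upsilon_1=\{d(\chi_C): \kappa(C,V\setminus C)=1\}$; $K_\lambda=\{x\in K: 2\langle x,\lambda\rangle=q(\lambda)\}$. A cut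 subgraph is the set of edges joining different parts of a partition $V_1,\dots,V_s$ of $V$; a coherent acyclic orientation of it orients, for some such partition, all edges from $V_i$ to $V_j$ when $i<j$. An orientation is acyclic if it contains no directed cycle. *)

theory Defs
  imports "HOL-Analysis.Analysis"
begin

text \<open>A finite (multi)graph with vertex set V and edge set E; every edge e has
  a fixed reference orientation from tle e to hde e (loops allowed).
  Oriented edges are pairs (e, b): (e, True) is e, (e, False) is its reverse.
  A real 1-cochain is a vector x :: real^'e, x$e being its value on (e, True);
  its value on (e, False) is -(x$e).  Cochains are taken to vanish off E.\<close>

definition ohd :: "('e \<Rightarrow> 'v) \<Rightarrow> ('e \<Rightarrow> 'v) \<Rightarrow> 'e \<times> bool \<Rightarrow> 'v" where
  "ohd hde tle oe = (if snd oe then hde (fst oe) else tle (fst oe))"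

definition otl :: "('e \<Rightarrow> 'v) \<Rightarrow> ('e \<Rightarrow> 'v) \<Rightarrow> 'e \<times> bool \<Rightarrow> 'v" where
  "otl hde tle oe = (if snd oe then tle (fst oe) else hde (fst oe))"

definition oval :: "real^'e \<Rightarrow> 'e \<times> bool \<Rightarrow> real" where
  "oval x oe = (if snd oe then x $ fst oe else - (x $ fst oe))"

definition oriented_edges :: "'e set \<Rightarrow> ('e \<times> bool) set" where
  "oriented_edges E = E \<times> UNIV"

definition is_graph :: "'v set \<Rightarrow> 'e set \<Rightarrow> ('e \<Rightarrow> 'v) \<Rightarrow> ('e \<Rightarrow> 'v) \<Rightarrow> bool" where
  "is_graph V E hde tle \<longleftrightarrow> finite V \<and> finite E \<and> (\<forall>e\<in>E. hde e \<in> V \<and> tle e \<in> V)"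

definition adj_in :: "'e set \<Rightarrow> ('e \<Rightarrow> 'v) \<Rightarrow> ('e \<Rightarrow> 'v) \<Rightarrow> 'v set \<Rightarrow> ('v \<times> 'v) set" where
  "adj_in E hde tle C = {(u, w). \<exists>e\<in>E. hde e \<in> C \<and> tle e \<in> C \<and>
                         ((u = tle e \<and> w = hde e) \<or> (u = hde e \<and> w = tle e))}"

definition num_components :: "'e set \<Rightarrow> ('e \<Rightarrow> 'v) \<Rightarrow> ('e \<Rightarrow> 'v) \<Rightarrow> 'v set \<Rightarrow> nat" where
  "num_components E hde tle C = card (C // ((adj_in E hde tle C)\<^sup>*))"

definition connected_graph :: "'v set \<Rightarrow> 'e set \<Rightarrow> ('e \<Rightarrow> 'v) \<Rightarrow> ('e \<Rightarrow> 'v) \<Rightarrow> bool" where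
  "connected_graph V E hde tle \<longleftrightarrow> num_components E hde tle V = 1"

definition kappa :: "'v set \<Rightarrow> 'e set \<Rightarrow> ('e \<Rightarrow> 'v) \<Rightarrow> ('e \<Rightarrow> 'v) \<Rightarrow> 'v set \<Rightarrow> int" where
  "kappa V E hde tle C = int (num_components E hde tle C) + int (num_components E hde tle (V - C)) - 1"

definition cobd :: "'e set \<Rightarrow> ('e \<Rightarrow> 'v) \<Rightarrow> ('e \<Rightarrow> 'v) \<Rightarrow> ('v \<Rightarrow> real) \<Rightarrow> real^'e" where
  "cobd E hde tle f = (\<chi> e. if e \<in> E then f (hde e) - f (tle e) else 0)"

definition inner_c :: "'e set \<Rightarrow> real^'e \<Rightarrow> real^'e \<Rightarrow> real" where
  "inner_c E x y = (\<Sum>e\<in>E. x $ e * y $ e)"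

definition qf :: "'e set \<Rightarrow> real^'e \<Rightarrow> real" where
  "qf E x = inner_c E x x"

definition Kspace :: "'v set \<Rightarrow> 'e set \<Rightarrow> ('e \<Rightarrow> 'v) \<Rightarrow> ('e \<Rightarrow> 'v) \<Rightarrow> (real^'e) set" where
  "Kspace V E hde tle = cobd E hde tle ` UNIV"

definition Llattice :: "'v set \<Rightarrow> 'e set \<Rightarrow> ('e \<Rightarrow> 'v) \<Rightarrow> ('e \<Rightarrow> 'v) \<Rightarrow> (real^'e) set" where
  "Llattice V E hde tle = cobd E hde tle ` {f. \<forall>v. f v \<in> \<int>}"

definition VcO :: "'v set \<Rightarrow> 'e set \<Rightarrow> ('e \<Rightarrow> 'v) \<Rightarrow> ('e \<Rightarrow> 'v) \<Rightarrow> (real^'e) set" where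
  "VcO V E hde tle = {x \<in> Kspace V E hde tle. \<forall>\<mu>\<in>Llattice V E hde tle. qf E x \<le> qf E (x - \<mu>)}"

definition supp_c :: "'e set \<Rightarrow> real^'e \<Rightarrow> ('e \<times> bool) set" where
  "supp_c E x = {oe \<in> oriented_edges E. oval x oe > 0}"

definition chi :: "'v set \<Rightarrow> 'v \<Rightarrow> real" where
  "chi C v = (if v \<in> C then 1 else 0)"

definition Upsilon1 :: "'v set \<Rightarrow> 'e set \<Rightarrow> ('e \<Rightarrow> 'v) \<Rightarrow> ('e \<Rightarrow> 'v) \<Rightarrow> (real^'e) set" where
  "Upsilon1 V E hde tle = {cobd E hde tle (chi C) | C. C \<subseteq> V \<and> kappa V E hde tle C = 1}"

definition Klam :: "'v set \<Rightarrow> 'e set \<Rightarrow> ('e \<Rightarrow> 'v) \<Rightarrow> ('e \<Rightarrow> 'v) \<Rightarrow> real^'e \<Rightarrow> (real^'e) set" where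
  "Klam V E hde tle lam = {x \<in> Kspace V E hde tle. 2 * inner_c E x lam = qf E lam}"

definition phi_c :: "'v set \<Rightarrow> 'e set \<Rightarrow> ('e \<Rightarrow> 'v) \<Rightarrow> ('e \<Rightarrow> 'v) \<Rightarrow> (real^'e) set \<Rightarrow> ('e \<times> bool) set" where
  "phi_c V E hde tle F =
     \<Union>{supp_c E lam | lam. lam \<in> Upsilon1 V E hde tle \<and> F \<subseteq> Klam V E hde tle lam}"

definition acyclic_oset :: "('e \<Rightarrow> 'v) \<Rightarrow> ('e \<Rightarrow> 'v) \<Rightarrow> ('e \<times> bool) set \<Rightarrow> bool" where
  "acyclic_oset hde tle D \<longleftrightarrow> acyclic {(otl hde tle oe, ohd hde tle oe) | oe. oe \<in> D}"

definition acyclic_orientations :: "'e set \<Rightarrow> ('e \<Rightarrow> 'v) \<Rightarrow> ('e \<Rightarrow> 'v) \<Rightarrow> ('e \<times> bool) set set" where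
  "acyclic_orientations E hde tle =
     {D. D \<subseteq> oriented_edges {e \<in> E. hde e \<noteq> tle e} \<and>
         (\<forall>e\<in>E. hde e \<noteq> tle e \<longrightarrow> ((e, True) \<in> D \<longleftrightarrow> (e, False) \<notin> D)) \<and>
         acyclic_oset hde tle D}"

text \<open>Coherent acyclic orientation of a cut subgraph: for an ordered partition
  V_1,...,V_s of V (encoded by the index map p : V \<rightarrow> nat, V_i = p^{-1}(i)), the set of
  all edges between different parts, each oriented from the part of smaller index
  to the part of larger index.\<close>
definition coherent_cut_orientation ::
  "'v set \<Rightarrow> 'e set \<Rightarrow> ('e \<Rightarrow> 'v) \<Rightarrow> ('e \<Rightarrow> 'v) \<Rightarrow> ('e \<times> bool) set \<Rightarrow> bool" where
  "coherent_cut_orientation V E hde tle Ori \<longleftrightarrow>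
     (\<exists>p :: 'v \<Rightarrow> nat. Ori = {oe \<in> oriented_edges E. p (otl hde tle oe) < p (ohd hde tle oe)})"

end

theory Submission
  imports Defs
begin



locale gr =
  fixes V :: "'v set" and E :: "'e::finite set" and hde tle :: "'e \<Rightarrow> 'v"
  assumes graph: "is_graph V E hde tle"
    and conn: "connected_graph V E hde tle"
begin

abbreviation "d \<equiv> cobd E hde tle"
abbreviation "KK \<equiv> Kspace V E hde tle"
abbreviation "LL \<equiv> Llattice V E hde tle"
abbreviation "VC \<equiv> VcO V E hde tle"
abbreviation "AO \<equiv> acyclic_orientations E hde tle"
abbreviation "adj \<equiv> adj_in E hde tle"

lemma finV: "finite V" and finE: "finite E" and endsV: "e \<in> E \<Longrightarrow> hde e \<in> V \<and> tle e \<in> V"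
  using graph by (auto simp: is_graph_def)

lemma d_comp: "d f $ e = (if e \<in> E then f (hde e) - f (tle e) else 0)"
  by (simp add: cobd_def)

lemma d_off: "e \<notin> E \<Longrightarrow> d f $ e = 0"
  by (simp add: cobd_def)

lemma inner_c_eq: "(\<And>e. e \<notin> E \<Longrightarrow> y $ e = 0) \<Longrightarrow> inner_c E x y = x \<bullet> y"
proof -
  assume z: "\<And>e. e \<notin> E \<Longrightarrow> y $ e = 0"
  have "x \<bullet> y = (\<Sum>e\<in>UNIV. x $ e * y $ e)" by (simp add: inner_vec_def)
  also have "\<dots> = (\<Sum>e\<in>E. x $ e * y $ e)"
    by (rule sum.mono_neutral_right) (auto simp: z)
  finally show ?thesis by (simp add: inner_c_def)
qed

lemma inner_c_d: "inner_c E x (d f) = x \<bullet> d f"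
  by (rule inner_c_eq) (simp add: d_off)

lemma d_add: "d (\<lambda>v. f v + g v) = d f + d g"
  by (simp add: cobd_def vec_eq_iff)
lemma d_scale: "d (\<lambda>v. c * f v) = c *\<^sub>R d f"
  by (simp add: cobd_def vec_eq_iff algebra_simps)
lemma d_diff: "d (\<lambda>v. f v - g v) = d f - d g"
  by (simp add: cobd_def vec_eq_iff)
lemma d_zero: "d (\<lambda>v. 0) = 0"
  by (simp add: cobd_def vec_eq_iff)

lemma K_eq: "KK = range d" by (simp add: Kspace_def)

lemma subspace_K: "subspace KK"
  unfolding subspace_def K_eq
proof (intro conjI ballI allI)
  show "0 \<in> range d" unfolding d_zero[symmetric] by (rule rangeI)
  fix x y assume "x \<in> range d" "y \<in> range d"
  then obtain f g where fg: "x = d f" "y = d g" by auto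
  show "x + y \<in> range d" unfolding fg d_add[symmetric] by (rule rangeI)
next
  fix c x assume "x \<in> range d"
  then obtain f where f: "x = d f" by auto
  show "c *\<^sub>R x \<in> range d" unfolding f d_scale[symmetric] by (rule rangeI)
qed

lemma oval_d: "fst oe \<in> E \<Longrightarrow> oval (d f) oe = f (ohd hde tle oe) - f (otl hde tle oe)"
  by (cases oe) (auto simp: oval_def ohd_def otl_def d_comp)

lemma qf_diff: "qf E (x - y) = qf E x - 2 * inner_c E x y + qf E y"
proof -
  have "qf E (x - y) = (\<Sum>e\<in>E. (x$e*x$e + y$e*y$e) - 2 * (x$e*y$e))"
    unfolding qf_def inner_c_def by (rule sum.cong) (auto simp: algebra_simps)
  also have "\<dots> = (\<Sum>e\<in>E. x$e*x$e) + (\<Sum>e\<in>E. y$e*y$e) - 2 * (\<Sum>e\<in>E. x$e*y$e)"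
    by (simp only: sum_subtractf sum.distrib sum_distrib_left)
  finally show ?thesis by (simp add: qf_def inner_c_def)
qed


lemma VC_iff: "x \<in> VC \<longleftrightarrow> x \<in> KK \<and> (\<forall>g. (\<forall>v. g v \<in> \<int>) \<longrightarrow> 2 * (x \<bullet> d g) \<le> qf E (d g))"
  unfolding VcO_def Llattice_def by (auto simp: qf_diff inner_c_d)

lemma int_abs_le_sq: fixes r :: real assumes "r \<in> \<int>" shows "\<bar>r\<bar> \<le> r\<^sup>2"
proof -
  obtain k where k: "r = of_int k" using assms Ints_cases by blast
  have "\<bar>k\<bar> \<le> k\<^sup>2"
  proof (cases "k = 0")
    case False
    then have "1 \<le> \<bar>k\<bar>" by linarith
    from mult_left_mono[OF this abs_ge_zero[of k]] have "\<bar>k\<bar> * 1 \<le> \<bar>k\<bar> * \<bar>k\<bar>" .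
    then show ?thesis by (simp add: power2_eq_square abs_mult_self_eq)
  qed simp
  then have "real_of_int \<bar>k\<bar> \<le> real_of_int (k\<^sup>2)" by linarith
  then show ?thesis by (simp add: k)
qed

lemma d_int: "(\<forall>v. g v \<in> \<int>) \<Longrightarrow> d g $ e \<in> \<int>"
  by (simp add: d_comp)

lemma sum_abs_le_qf: "(\<forall>v. g v \<in> \<int>) \<Longrightarrow> (\<Sum>e\<in>E. \<bar>d g $ e\<bar>) \<le> qf E (d g)"
  unfolding qf_def inner_c_def
  by (rule sum_mono) (metis d_int int_abs_le_sq power2_eq_square)

lemma chi_int: "\<forall>v. chi C v \<in> \<int>" by (simp add: chi_def)

lemma abs_dchi: "\<bar>d (chi C) $ e\<bar> = d (chi C) $ e * d (chi C) $ e"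
  by (simp add: d_comp chi_def)

lemma qf_chi: "qf E (d (chi C)) = (\<Sum>e\<in>E. \<bar>d (chi C) $ e\<bar>)"
  by (simp add: qf_def inner_c_def abs_dchi)

lemma cut_ineq: "x \<in> VC \<Longrightarrow> 2*(x \<bullet> d (chi C)) \<le> (\<Sum>e\<in>E. \<bar>d (chi C) $ e\<bar>)"
  unfolding VC_iff qf_chi[symmetric] using chi_int[of C] by blast

lemma layer_cake:
  assumes cut: "\<And>C. C \<subseteq> V \<Longrightarrow> 2*(x \<bullet> d (chi C)) \<le> (\<Sum>e\<in>E. \<bar>d (chi C) $ e\<bar>)"
  shows "2*(x \<bullet> d h) \<le> (\<Sum>e\<in>E. \<bar>d h $ e\<bar>)"
proof (induction "card (h ` V)" arbitrary: h rule: less_induct)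
  case less
  have fin: "finite (h`V)" using finV by simp
  show ?case
  proof (cases "card (h ` V) \<le> 1")
    case True
    have "card (h`V) \<le> Suc 0" using True by simp
    then have "\<forall>a\<in>h`V. \<forall>b\<in>h`V. a = b" by (simp only: card_le_Suc0_iff_eq[OF fin])
    then have eq: "\<And>v w. v\<in>V \<Longrightarrow> w\<in>V \<Longrightarrow> h v = h w" by blast
    have "d h $ e = 0" for e
      using eq[of "hde e" "tle e"] endsV[of e] by (simp add: d_comp)
    then have "d h = 0" by (simp add: vec_eq_iff)
    then show ?thesis by simp
  next
    case False
    define a where "a = Min (h ` V)"
    define b where "b = Min (h ` V - {a})"
    have ne: "h ` V \<noteq> {}" using False by auto
    have aV: "a \<in> h`V" unfolding a_def using fin ne by (rule Min_in)
    have ne2: "h`V - {a} \<noteq> {}"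
    proof
      assume "h`V - {a} = {}"
      then have "h`V \<subseteq> {a}" by auto
      then have "card (h`V) \<le> card {a}" by (intro card_mono) auto
      then show False using False by simp
    qed
    have bV: "b \<in> h`V - {a}" unfolding b_def using fin ne2 by (intro Min_in) auto
    have ge_a: "\<And>v. v\<in>V \<Longrightarrow> a \<le> h v" unfolding a_def using fin by auto
    have ge_b: "\<And>v. v\<in>V \<Longrightarrow> h v \<noteq> a \<Longrightarrow> b \<le> h v" unfolding b_def using fin by auto
    have ab: "a < b" using bV ge_a by force
    define C where "C = {v\<in>V. a < h v}"
    define h' where "h' = (\<lambda>v. h v - (b - a) * chi C v)"
    have sub: "h' ` V \<subseteq> (\<lambda>t. t - (b-a)) ` (h`V - {a})"
    proof
      fix y assume "y \<in> h' ` V"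
      then obtain v where v: "v \<in> V" "y = h' v" by auto
      show "y \<in> (\<lambda>t. t - (b-a)) ` (h`V - {a})"
      proof (cases "v \<in> C")
        case True
        then have "h v \<noteq> a" "y = h v - (b - a)" using v by (auto simp: h'_def chi_def C_def)
        then show ?thesis using v by (intro image_eqI[of _ _ "h v"]) auto
      next
        case False
        then have "h v = a" using v ge_a[of v] by (auto simp: C_def)
        then have "y = b - (b - a)" using v False by (simp add: h'_def chi_def)
        then show ?thesis using bV by blast
      qed
    qed
    have "card (h'`V) \<le> card ((\<lambda>t. t - (b-a)) ` (h`V - {a}))"
      by (rule card_mono) (use fin sub in auto)
    also have "\<dots> \<le> card (h`V - {a})" by (rule card_image_le) (use fin in auto)
    also have "\<dots> < card (h`V)" using fin aV False by (simp add: card_Diff_singleton)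
    finally have lt: "card (h'`V) < card (h`V)" .
    have IH: "2*(x \<bullet> d h') \<le> (\<Sum>e\<in>E. \<bar>d h' $ e\<bar>)" using less(1)[OF lt] .
    have dh: "d h = d h' + (b - a) *\<^sub>R d (chi C)"
      by (simp add: vec_eq_iff d_comp h'_def algebra_simps)
    have edge: "\<bar>d h $ e\<bar> = \<bar>d h' $ e\<bar> + (b-a) * \<bar>d (chi C) $ e\<bar>" if e: "e \<in> E" for e
    proof -
      have pV: "hde e \<in> V" and qV: "tle e \<in> V" using endsV e by auto
      have hp: "hde e \<in> C \<Longrightarrow> b \<le> h (hde e)" "hde e \<notin> C \<Longrightarrow> h (hde e) = a"
        using pV ge_a[OF pV] ge_b[OF pV] by (auto simp: C_def)
      have hq: "tle e \<in> C \<Longrightarrow> b \<le> h (tle e)" "tle e \<notin> C \<Longrightarrow> h (tle e) = a"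
        using qV ge_a[OF qV] ge_b[OF qV] by (auto simp: C_def)
      have D1: "d h $ e = h (hde e) - h (tle e)" using e by (simp add: d_comp)
      have D2: "d h' $ e = h (hde e) - (b-a) * chi C (hde e) - (h (tle e) - (b-a) * chi C (tle e))"
        using e by (simp add: d_comp h'_def)
      have D3: "d (chi C) $ e = chi C (hde e) - chi C (tle e)" using e by (simp add: d_comp)
      show ?thesis
      proof (cases "hde e \<in> C")
        case T1: True
        show ?thesis
        proof (cases "tle e \<in> C")
          case True
          then show ?thesis using T1 unfolding D1 D2 D3 chi_def by simp
        next
          case False
          then have "h (tle e) = a" "b \<le> h (hde e)" using T1 hp hq by auto
          then show ?thesis using T1 False ab unfolding D1 D2 D3 chi_def by simp
        qed
      next
        case F1: False
        show ?thesis
        proof (cases "tle e \<in> C")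
          case True
          then have "h (hde e) = a" "b \<le> h (tle e)" using F1 hp hq by auto
          then show ?thesis using True F1 ab unfolding D1 D2 D3 chi_def by simp
        next
          case False
          then have "h (tle e) = a" "h (hde e) = a" using F1 hp hq by auto
          then show ?thesis using F1 False unfolding D1 D2 D3 chi_def by simp
        qed
      qed
    qed
    have S: "(\<Sum>e\<in>E. \<bar>d h $ e\<bar>) = (\<Sum>e\<in>E. \<bar>d h' $ e\<bar>) + (b-a) * (\<Sum>e\<in>E. \<bar>d (chi C) $ e\<bar>)"
      by (simp add: edge sum.distrib sum_distrib_left)
    have CV: "C \<subseteq> V" unfolding C_def by blast
    have c0: "2*(x \<bullet> d (chi C)) \<le> (\<Sum>e\<in>E. \<bar>d (chi C) $ e\<bar>)" by (rule cut[OF CV])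
    have ba: "0 \<le> b - a" using ab by simp
    have c: "(b-a) * (2*(x \<bullet> d (chi C))) \<le> (b-a) * (\<Sum>e\<in>E. \<bar>d (chi C) $ e\<bar>)"
      by (rule mult_left_mono[OF c0 ba])
    have "2*(x \<bullet> d h) = 2*(x \<bullet> d h') + (b-a) * (2*(x \<bullet> d (chi C)))"
      by (simp add: dh inner_add_right algebra_simps)
    then show ?thesis using IH c S by linarith
  qed
qed

lemma VC_bound: "x \<in> VC \<Longrightarrow> 2*(x \<bullet> d h) \<le> (\<Sum>e\<in>E. \<bar>d h $ e\<bar>)"
  by (rule layer_cake) (rule cut_ineq)

end



context gr begin

lemma VC_sub_K: "VC \<subseteq> KK" by (auto simp: VcO_def)

lemma VC_eq: "VC = KK \<inter> \<Inter> ((\<lambda>C. {x. (2 *\<^sub>R d (chi C)) \<bullet> x \<le> (\<Sum>e\<in>E. \<bar>d (chi C) $ e\<bar>)}) ` Pow V)"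
proof
  show "VC \<subseteq> KK \<inter> \<Inter> ((\<lambda>C. {x. (2 *\<^sub>R d (chi C)) \<bullet> x \<le> (\<Sum>e\<in>E. \<bar>d (chi C) $ e\<bar>)}) ` Pow V)"
  proof
    fix x assume x: "x \<in> VC"
    have "\<And>C. (2 *\<^sub>R d (chi C)) \<bullet> x \<le> (\<Sum>e\<in>E. \<bar>d (chi C) $ e\<bar>)"
      using cut_ineq[OF x] by (simp add: inner_commute)
    then show "x \<in> KK \<inter> \<Inter> ((\<lambda>C. {x. (2 *\<^sub>R d (chi C)) \<bullet> x \<le> (\<Sum>e\<in>E. \<bar>d (chi C) $ e\<bar>)}) ` Pow V)"
      using x VC_sub_K by blast
  qed
next
  show "KK \<inter> \<Inter> ((\<lambda>C. {x. (2 *\<^sub>R d (chi C)) \<bullet> x \<le> (\<Sum>e\<in>E. \<bar>d (chi C) $ e\<bar>)}) ` Pow V) \<subseteq> VC"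
  proof
    fix x assume x: "x \<in> KK \<inter> \<Inter> ((\<lambda>C. {x. (2 *\<^sub>R d (chi C)) \<bullet> x \<le> (\<Sum>e\<in>E. \<bar>d (chi C) $ e\<bar>)}) ` Pow V)"
    have cut: "2*(x \<bullet> d (chi C)) \<le> (\<Sum>e\<in>E. \<bar>d (chi C) $ e\<bar>)" if "C \<subseteq> V" for C
      using x that by (simp add: inner_commute)
    have "2 * (x \<bullet> d g) \<le> qf E (d g)" if "\<forall>v. g v \<in> \<int>" for g
      using layer_cake[OF cut, of g] sum_abs_le_qf[OF that] by linarith
    then show "x \<in> VC" using x by (simp add: VC_iff)
  qed
qed

lemma poly_VC: "polyhedron VC"
proof -
  have "polyhedron KK" by (rule affine_imp_polyhedron[OF subspace_imp_affine[OF subspace_K]])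
  moreover have "polyhedron (\<Inter> ((\<lambda>C. {x. (2 *\<^sub>R d (chi C)) \<bullet> x \<le> (\<Sum>e\<in>E. \<bar>d (chi C) $ e\<bar>)}) ` Pow V))"
  proof (rule polyhedron_Inter)
    show "finite ((\<lambda>C. {x. (2 *\<^sub>R d (chi C)) \<bullet> x \<le> (\<Sum>e\<in>E. \<bar>d (chi C) $ e\<bar>)}) ` Pow V)"
      using finV by simp
  next
    fix S assume "S \<in> (\<lambda>C. {x. (2 *\<^sub>R d (chi C)) \<bullet> x \<le> (\<Sum>e\<in>E. \<bar>d (chi C) $ e\<bar>)}) ` Pow V"
    then obtain C where "S = {x. (2 *\<^sub>R d (chi C)) \<bullet> x \<le> (\<Sum>e\<in>E. \<bar>d (chi C) $ e\<bar>)}" by blast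
    then show "polyhedron S" by (simp only: polyhedron_halfspace_le)
  qed
  ultimately show ?thesis by (subst VC_eq) (rule polyhedron_Int)
qed

lemma convex_VC: "convex VC" by (rule polyhedron_imp_convex[OF poly_VC])
lemma closed_VC: "closed VC" by (rule polyhedron_imp_closed[OF poly_VC])

lemma proj_vec: "\<exists>y\<in>KK. \<forall>x\<in>KK. a \<bullet> x = y \<bullet> x"
proof -
  obtain y z where y: "y \<in> span KK" and z: "\<And>w. w \<in> span KK \<Longrightarrow> orthogonal z w" and a: "a = y + z"
    using orthogonal_subspace_decomp_exists[of KK a] by blast
  have sp: "span KK = KK" using subspace_K by simp
  have "\<forall>x\<in>KK. a \<bullet> x = y \<bullet> x"
  proof
    fix x assume "x \<in> KK"
    then have "z \<bullet> x = 0" using z sp by (simp add: orthogonal_def)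
    then show "a \<bullet> x = y \<bullet> x" by (simp add: a inner_add_left)
  qed
  then show ?thesis using y sp by auto
qed

lemma proj: "\<exists>h. \<forall>x\<in>KK. a \<bullet> x = d h \<bullet> x"
  using proj_vec[of a] by (auto simp: K_eq)

lemma bounded_VC: "bounded VC"
proof -
  have "\<forall>i. \<exists>h. \<forall>x\<in>KK. axis i 1 \<bullet> x = d h \<bullet> x" using proj by blast
  then obtain H where H: "\<And>i x. x\<in>KK \<Longrightarrow> axis i 1 \<bullet> x = d (H i) \<bullet> x" by metis
  have comp: "\<bar>x $ i\<bar> \<le> (\<Sum>e\<in>E. \<bar>d (H i) $ e\<bar>)" if x: "x \<in> VC" for x i
  proof -
    have xK: "x \<in> KK" using x VC_sub_K by blast
    have xi: "x $ i = d (H i) \<bullet> x" using H[OF xK, of i] by (simp add: inner_axis')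
    have b1: "2 * (x \<bullet> d (H i)) \<le> (\<Sum>e\<in>E. \<bar>d (H i) $ e\<bar>)" by (rule VC_bound[OF x])
    have b2: "2 * (x \<bullet> d (\<lambda>v. (-1) * H i v)) \<le> (\<Sum>e\<in>E. \<bar>d (\<lambda>v. (-1) * H i v) $ e\<bar>)"
      by (rule VC_bound[OF x])
    have "d (\<lambda>v. (-1) * H i v) = - d (H i)" by (simp only: d_scale) simp
    then have b3: "2 * (- (x \<bullet> d (H i))) \<le> (\<Sum>e\<in>E. \<bar>d (H i) $ e\<bar>)" using b2 by simp
    have s0: "0 \<le> (\<Sum>e\<in>E. \<bar>d (H i) $ e\<bar>)" by (rule sum_nonneg) simp
    show ?thesis using b1 b3 s0 xi by (simp add: inner_commute abs_le_iff)
  qed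
  have "norm x \<le> (\<Sum>i\<in>UNIV. \<Sum>e\<in>E. \<bar>d (H i) $ e\<bar>)" if "x \<in> VC" for x
    using norm_le_l1_cart[of x] sum_mono[of UNIV "\<lambda>i. \<bar>x $ i\<bar>", OF comp[OF that]] by linarith
  then show ?thesis unfolding bounded_iff by blast
qed

lemma compact_VC: "compact VC"
  using bounded_VC closed_VC compact_eq_bounded_closed by blast

end



context gr begin

definition wD :: "('e \<times> bool) set \<Rightarrow> real^'e" where
  "wD D = (\<chi> e. if e \<in> E \<and> (e,True) \<in> D then 1/2 else if e \<in> E \<and> (e,False) \<in> D then -1/2 else 0)"

definition nu :: "('e \<times> bool) set \<Rightarrow> real^'e" where
  "nu D = (SOME y. y \<in> KK \<and> (\<forall>x\<in>KK. wD D \<bullet> x = y \<bullet> x))"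

lemma nu_prop: "nu D \<in> KK \<and> (\<forall>x\<in>KK. wD D \<bullet> x = nu D \<bullet> x)"
  unfolding nu_def by (rule someI_ex) (use proj_vec[of "wD D"] in blast)

lemma nu_K: "nu D \<in> KK" using nu_prop by blast
lemma nu_d: "nu D \<bullet> d f = wD D \<bullet> d f"
  using nu_prop[of D] by (simp add: K_eq)

lemma AO_sub: "D \<in> AO \<Longrightarrow> oe \<in> D \<Longrightarrow> fst oe \<in> E \<and> hde (fst oe) \<noteq> tle (fst oe)"
  by (auto simp: acyclic_orientations_def oriented_edges_def)

lemma AO_or: "D \<in> AO \<Longrightarrow> e \<in> E \<Longrightarrow> hde e \<noteq> tle e \<Longrightarrow> ((e,True) \<in> D \<longleftrightarrow> (e,False) \<notin> D)"
  by (auto simp: acyclic_orientations_def)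

lemma supp_d_iff: "supp_c E (d f) \<subseteq> D \<longleftrightarrow>
   (\<forall>e\<in>E. (d f $ e > 0 \<longrightarrow> (e,True) \<in> D) \<and> (d f $ e < 0 \<longrightarrow> (e,False) \<in> D))"
proof
  assume a: "supp_c E (d f) \<subseteq> D"
  show "\<forall>e\<in>E. (d f $ e > 0 \<longrightarrow> (e,True) \<in> D) \<and> (d f $ e < 0 \<longrightarrow> (e,False) \<in> D)"
  proof (intro ballI conjI impI)
    fix e assume "e \<in> E" "d f $ e > 0"
    then have "(e,True) \<in> supp_c E (d f)" by (simp add: supp_c_def oriented_edges_def oval_def)
    then show "(e,True) \<in> D" using a by blast
  next
    fix e assume "e \<in> E" "d f $ e < 0"
    then have "(e,False) \<in> supp_c E (d f)" by (simp add: supp_c_def oriented_edges_def oval_def)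
    then show "(e,False) \<in> D" using a by blast
  qed
next
  assume a: "\<forall>e\<in>E. (d f $ e > 0 \<longrightarrow> (e,True) \<in> D) \<and> (d f $ e < 0 \<longrightarrow> (e,False) \<in> D)"
  show "supp_c E (d f) \<subseteq> D"
  proof
    fix oe assume "oe \<in> supp_c E (d f)"
    then obtain e b where oe: "oe = (e,b)" "e \<in> E" "oval (d f) (e,b) > 0"
      by (cases oe) (auto simp: supp_c_def oriented_edges_def)
    show "oe \<in> D"
    proof (cases b)
      case True
      then show ?thesis using oe a by (simp add: oval_def)
    next
      case False
      then show ?thesis using oe a by (simp add: oval_def)
    qed
  qed
qed

lemma W_edge:
  assumes D: "D \<in> AO" and e: "e \<in> E"
  shows "0 \<le> \<bar>d f $ e\<bar> - 2 * (wD D $ e * d f $ e) \<and>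
    (\<bar>d f $ e\<bar> - 2 * (wD D $ e * d f $ e) = 0 \<longleftrightarrow>
      (d f $ e > 0 \<longrightarrow> (e,True) \<in> D) \<and> (d f $ e < 0 \<longrightarrow> (e,False) \<in> D))"
proof (cases "hde e = tle e")
  case True
  then have "(e,True) \<notin> D" "(e,False) \<notin> D" using AO_sub[OF D, of "(e,True)"] AO_sub[OF D, of "(e,False)"] by auto
  moreover have "d f $ e = 0" using True e by (simp add: d_comp)
  ultimately show ?thesis by (simp add: wD_def)
next
  case False
  note or = AO_or[OF D e False]
  show ?thesis
  proof (cases "(e,True) \<in> D")
    case True
    then have "(e,False) \<notin> D" using or by blast
    then show ?thesis using True e by (simp add: wD_def abs_if)
  next
    case F: False
    then have "(e,False) \<in> D" using or by blast
    then show ?thesis using F e by (simp add: wD_def abs_if)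
  qed
qed

lemma W_sum: "2 * (wD D \<bullet> d f) = (\<Sum>e\<in>E. 2 * (wD D $ e * d f $ e))"
  by (simp add: inner_c_d[symmetric] inner_c_def sum_distrib_left)

lemma W_le: "D \<in> AO \<Longrightarrow> 2 * (wD D \<bullet> d f) \<le> (\<Sum>e\<in>E. \<bar>d f $ e\<bar>)"
proof -
  assume D: "D \<in> AO"
  have "0 \<le> (\<Sum>e\<in>E. \<bar>d f $ e\<bar> - 2 * (wD D $ e * d f $ e))"
    by (rule sum_nonneg) (use W_edge[OF D] in blast)
  then show ?thesis by (simp add: W_sum sum_subtractf)
qed

lemma W_eq: "D \<in> AO \<Longrightarrow> 2 * (wD D \<bullet> d f) = (\<Sum>e\<in>E. \<bar>d f $ e\<bar>) \<longleftrightarrow> supp_c E (d f) \<subseteq> D"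
proof -
  assume D: "D \<in> AO"
  have "2 * (wD D \<bullet> d f) = (\<Sum>e\<in>E. \<bar>d f $ e\<bar>) \<longleftrightarrow>
        (\<Sum>e\<in>E. \<bar>d f $ e\<bar> - 2 * (wD D $ e * d f $ e)) = 0"
    by (simp add: W_sum sum_subtractf) linarith
  also have "\<dots> \<longleftrightarrow> (\<forall>e\<in>E. \<bar>d f $ e\<bar> - 2 * (wD D $ e * d f $ e) = 0)"
    by (rule sum_nonneg_eq_0_iff[OF finE]) (use W_edge[OF D] in blast)
  also have "\<dots> \<longleftrightarrow> (\<forall>e\<in>E. (d f $ e > 0 \<longrightarrow> (e,True) \<in> D) \<and> (d f $ e < 0 \<longrightarrow> (e,False) \<in> D))"
    using W_edge[OF D] by blast
  also have "\<dots> \<longleftrightarrow> supp_c E (d f) \<subseteq> D" by (rule supp_d_iff[symmetric])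
  finally show ?thesis .
qed

lemma nu_VC: "D \<in> AO \<Longrightarrow> nu D \<in> VC"
  unfolding VC_iff
proof (intro conjI allI impI)
  assume D: "D \<in> AO"
  show "nu D \<in> KK" by (rule nu_K)
  fix g :: "'v \<Rightarrow> real" assume g: "\<forall>v. g v \<in> \<int>"
  show "2 * (nu D \<bullet> d g) \<le> qf E (d g)"
    using W_le[OF D, of g] sum_abs_le_qf[OF g] by (simp add: nu_d)
qed

definition SS :: "('v \<Rightarrow> real) \<Rightarrow> real" where
  "SS h = (\<Sum>e\<in>E. \<bar>d h $ e\<bar>)"

definition Fu :: "('v \<Rightarrow> real) \<Rightarrow> (real^'e) set" where
  "Fu h = VC \<inter> {x. d h \<bullet> x = SS h / 2}"

lemma VC_le: "x \<in> VC \<Longrightarrow> d h \<bullet> x \<le> SS h / 2"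
  using VC_bound[of x h] by (simp add: SS_def inner_commute)

lemma Fu_face: "Fu h face_of VC"
  unfolding Fu_def by (rule face_of_Int_supporting_hyperplane_le[OF convex_VC VC_le])

lemma Fu_convex: "convex (Fu h)"
  using Fu_face face_of_imp_convex by blast

lemma Fu_compact: "compact (Fu h)"
  unfolding Fu_def by (rule compact_Int_closed[OF compact_VC closed_hyperplane])

lemma nu_Fu_iff: "D \<in> AO \<Longrightarrow> nu D \<in> Fu h \<longleftrightarrow> supp_c E (d h) \<subseteq> D"
proof -
  assume D: "D \<in> AO"
  have "nu D \<in> Fu h \<longleftrightarrow> 2 * (wD D \<bullet> d h) = (\<Sum>e\<in>E. \<bar>d h $ e\<bar>)"
    using nu_VC[OF D] nu_d[of D h] by (simp add: Fu_def SS_def inner_commute) linarith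
  then show ?thesis using W_eq[OF D, of h] by simp
qed

end



context gr begin

lemma oh_simps[simp]: "ohd hde tle (e,True) = hde e" "ohd hde tle (e,False) = tle e"
  "otl hde tle (e,True) = tle e" "otl hde tle (e,False) = hde e"
  by (simp_all add: ohd_def otl_def)

lemma oval_neg: "oval x (e, \<not>b) = - oval x (e,b)"
  by (cases b) (simp_all add: oval_def)

lemma exists_AO:
  "\<exists>D\<in>AO. supp_c E (d h) \<subseteq> D \<and>
     ((fst oe0 \<in> E \<and> hde (fst oe0) \<noteq> tle (fst oe0) \<and> 0 \<le> oval (d h) oe0) \<longrightarrow> oe0 \<in> D)"
proof -
  obtain r0 :: "'v \<Rightarrow> nat" where inj: "inj_on r0 V"
    using finite_imp_inj_to_nat_seg[OF finV] by blast
  define t where "t = otl hde tle oe0"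
  define r where "r v = (if v = t then 0 else Suc (r0 v))" for v
  have injr: "inj_on r V"
  proof (rule inj_onI)
    fix x y assume xy: "x \<in> V" "y \<in> V" "r x = r y"
    show "x = y"
    proof (cases "x = t")
      case True
      then show ?thesis using xy by (auto simp: r_def split: if_splits)
    next
      case False
      then have "y \<noteq> t" using xy by (auto simp: r_def split: if_splits)
      then have "r0 x = r0 y" using xy False by (simp add: r_def)
      then show ?thesis using inj xy by (simp add: inj_on_def)
    qed
  qed
  define ord where "ord = {(u,w). h u < h w \<or> (h u = h w \<and> r u < r w)}"
  have trans: "trans ord" unfolding ord_def
    by (rule transI) auto
  have acyc_ord: "acyclic ord" unfolding acyclic_def using trans by (simp add: ord_def)
  define D where "D = {oe \<in> oriented_edges {e\<in>E. hde e \<noteq> tle e}. (otl hde tle oe, ohd hde tle oe) \<in> ord}"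
  have AO: "D \<in> AO"
    unfolding acyclic_orientations_def acyclic_oset_def
  proof (intro CollectI conjI ballI impI)
    show "D \<subseteq> oriented_edges {e \<in> E. hde e \<noteq> tle e}" by (auto simp: D_def)
  next
    fix e assume e: "e \<in> E" "hde e \<noteq> tle e"
    then have "r (hde e) \<noteq> r (tle e)" using injr endsV[OF e(1)] by (auto simp: inj_on_def)
    then show "(e, True) \<in> D \<longleftrightarrow> (e, False) \<notin> D"
      using e by (auto simp: D_def oriented_edges_def ord_def)
  next
    show "acyclic {(otl hde tle oe, ohd hde tle oe) |oe. oe \<in> D}"
      by (rule acyclic_subset[OF acyc_ord]) (auto simp: D_def)
  qed
  have supp: "supp_c E (d h) \<subseteq> D"
  proof
    fix oe assume "oe \<in> supp_c E (d h)"
    then obtain e b where oe: "oe = (e,b)" "e \<in> E" "oval (d h) (e,b) > 0"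
      by (cases oe) (auto simp: supp_c_def oriented_edges_def)
    then have pos: "h (ohd hde tle (e,b)) - h (otl hde tle (e,b)) > 0" using oval_d[of "(e,b)" h] by simp
    then have "hde e \<noteq> tle e" by (cases b) auto
    then show "oe \<in> D" using oe pos by (auto simp: D_def oriented_edges_def ord_def)
  qed
  have o0: "oe0 \<in> D" if a: "fst oe0 \<in> E" "hde (fst oe0) \<noteq> tle (fst oe0)" "0 \<le> oval (d h) oe0"
  proof -
    obtain e b where oe: "oe0 = (e,b)" by (cases oe0)
    have ge: "h (ohd hde tle (e,b)) - h (otl hde tle (e,b)) \<ge> 0" using a oval_d[of "(e,b)" h] oe by simp
    have ne: "ohd hde tle (e,b) \<noteq> t" using a oe by (cases b) (auto simp: t_def)
    have "(otl hde tle (e,b), ohd hde tle (e,b)) \<in> ord"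
      using ge ne by (auto simp: ord_def r_def t_def oe)
    then show ?thesis using a oe by (auto simp: D_def oriented_edges_def)
  qed
  show ?thesis using AO supp o0 by blast
qed

lemma AO_sub_eq: "D \<in> AO \<Longrightarrow> D' \<in> AO \<Longrightarrow> D \<subseteq> D' \<Longrightarrow> D = D'"
proof -
  assume D: "D \<in> AO" and D': "D' \<in> AO" and sub: "D \<subseteq> D'"
  have "D' \<subseteq> D"
  proof
    fix oe assume oe: "oe \<in> D'"
    obtain e b where eb: "oe = (e,b)" by (cases oe)
    have e: "e \<in> E" "hde e \<noteq> tle e" using AO_sub[OF D' oe] eb by auto
    show "oe \<in> D"
    proof (rule ccontr)
      assume "oe \<notin> D"
      then have "(e, \<not> b) \<in> D" using AO_or[OF D e] eb by (cases b) auto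
      then have "(e, \<not> b) \<in> D'" using sub by blast
      then show False using AO_or[OF D' e] oe eb by (cases b) auto
    qed
  qed
  then show "D = D'" using sub by blast
qed

lemma AO_supp: "D \<in> AO \<Longrightarrow> \<exists>h. supp_c E (d h) = D"
proof -
  assume D: "D \<in> AO"
  define R where "R = {(otl hde tle oe, ohd hde tle oe) |oe. oe \<in> D}"
  have acyc: "acyclic R" using D by (simp add: acyclic_orientations_def acyclic_oset_def R_def)
  define h where "h v = real (card {w\<in>V. (w,v) \<in> R\<^sup>+})" for v
  have inc: "h (otl hde tle oe) < h (ohd hde tle oe)" if oe: "oe \<in> D" for oe
  proof -
    define a where "a = otl hde tle oe"
    define b where "b = ohd hde tle oe"
    have ab: "(a,b) \<in> R" unfolding R_def a_def b_def using oe by blast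
    have aV: "a \<in> V" using AO_sub[OF D oe] endsV unfolding a_def otl_def by auto
    have sub: "{w\<in>V. (w,a) \<in> R\<^sup>+} \<subseteq> {w\<in>V. (w,b) \<in> R\<^sup>+}"
      using ab by (auto intro: trancl_into_trancl)
    have "a \<in> {w\<in>V. (w,b) \<in> R\<^sup>+}" using ab aV by auto
    moreover have "a \<notin> {w\<in>V. (w,a) \<in> R\<^sup>+}" using acyc by (auto simp: acyclic_def)
    ultimately have "{w\<in>V. (w,a) \<in> R\<^sup>+} \<subset> {w\<in>V. (w,b) \<in> R\<^sup>+}" using sub by blast
    then have "card {w\<in>V. (w,a) \<in> R\<^sup>+} < card {w\<in>V. (w,b) \<in> R\<^sup>+}"
      by (rule psubset_card_mono[rotated]) (simp add: finV)
    then show ?thesis by (simp add: h_def a_def b_def)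
  qed
  have "supp_c E (d h) = D"
  proof
    show "D \<subseteq> supp_c E (d h)"
    proof
      fix oe assume oe: "oe \<in> D"
      have "fst oe \<in> E" using AO_sub[OF D oe] by blast
      then show "oe \<in> supp_c E (d h)" using inc[OF oe] oval_d[of oe h]
        by (cases oe) (auto simp: supp_c_def oriented_edges_def)
    qed
  next
    show "supp_c E (d h) \<subseteq> D"
    proof
      fix oe assume "oe \<in> supp_c E (d h)"
      then obtain e b where oe: "oe = (e,b)" "e \<in> E" "oval (d h) (e,b) > 0"
        by (cases oe) (auto simp: supp_c_def oriented_edges_def)
      then have pos: "h (ohd hde tle (e,b)) - h (otl hde tle (e,b)) > 0" using oval_d[of "(e,b)" h] by simp
      then have ne: "hde e \<noteq> tle e" by (cases b) auto
      show "oe \<in> D"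
      proof (rule ccontr)
        assume "oe \<notin> D"
        then have "(e, \<not> b) \<in> D" using AO_or[OF D oe(2) ne] oe by (cases b) auto
        then have "h (otl hde tle (e, \<not>b)) < h (ohd hde tle (e, \<not>b))" by (rule inc)
        then show False using pos by (cases b) auto
      qed
    qed
  qed
  then show ?thesis by blast
qed

lemma face_Fu: "F face_of VC \<Longrightarrow> F \<noteq> {} \<Longrightarrow> \<exists>h. F = Fu h"
proof -
  assume F: "F face_of VC" and ne: "F \<noteq> {}"
  then have "F exposed_face_of VC" using exposed_face_of_polyhedron[OF poly_VC] by blast
  then obtain a b where ab: "VC \<subseteq> {x. a \<bullet> x \<le> b}" and Fe: "F = VC \<inter> {x. a \<bullet> x = b}"
    unfolding exposed_face_of_def by blast
  obtain h where h: "\<And>x. x\<in>KK \<Longrightarrow> a \<bullet> x = d h \<bullet> x" using proj by blast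
  have hV: "\<And>x. x\<in>VC \<Longrightarrow> a \<bullet> x = d h \<bullet> x" using h VC_sub_K by blast
  obtain x0 where x0: "x0 \<in> F" using ne by blast
  have "b = d h \<bullet> x0" using x0 Fe hV by auto
  also have "\<dots> \<le> SS h / 2" using x0 Fe VC_le by blast
  finally have b1: "b \<le> SS h / 2" .
  obtain D where D: "D \<in> AO" "supp_c E (d h) \<subseteq> D" using exists_AO[of h] by blast
  have "nu D \<in> Fu h" using nu_Fu_iff[OF D(1)] D(2) by blast
  then have "nu D \<in> VC" "d h \<bullet> nu D = SS h / 2" by (auto simp: Fu_def)
  then have b2: "SS h / 2 \<le> b" using ab hV by fastforce
  have "F = Fu h" using b1 b2 Fe hV by (auto simp: Fu_def)
  then show ?thesis by blast
qed

lemma extreme_nu: "x extreme_point_of VC \<Longrightarrow> \<exists>D\<in>AO. x = nu D"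
proof -
  assume "x extreme_point_of VC"
  then have "{x} face_of VC" by (simp add: face_of_singleton)
  then obtain h where h: "{x} = Fu h" using face_Fu by blast
  obtain D where D: "D \<in> AO" "supp_c E (d h) \<subseteq> D" using exists_AO[of h] by blast
  have "nu D \<in> Fu h" using nu_Fu_iff[OF D(1)] D(2) by blast
  then show ?thesis using h D by auto
qed

lemma Fu_hull: "Fu h = convex hull (nu ` {D \<in> AO. supp_c E (d h) \<subseteq> D})"
proof
  show "convex hull (nu ` {D \<in> AO. supp_c E (d h) \<subseteq> D}) \<subseteq> Fu h"
    by (rule hull_minimal) (auto simp: Fu_convex nu_Fu_iff)
next
  have "Fu h = convex hull {x. x extreme_point_of (Fu h)}"
    by (rule Krein_Milman_Minkowski[OF Fu_compact Fu_convex])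
  also have "\<dots> \<subseteq> convex hull (nu ` {D \<in> AO. supp_c E (d h) \<subseteq> D})"
  proof (rule hull_mono, rule subsetI)
    fix x assume "x \<in> {x. x extreme_point_of (Fu h)}"
    then have x: "x extreme_point_of VC" "x \<in> Fu h"
      using extreme_point_of_face[OF Fu_face] by auto
    obtain D where D: "D \<in> AO" "x = nu D" using extreme_nu[OF x(1)] by blast
    then have "supp_c E (d h) \<subseteq> D" using nu_Fu_iff[OF D(1)] x(2) by blast
    then show "x \<in> nu ` {D \<in> AO. supp_c E (d h) \<subseteq> D}" using D by blast
  qed
  finally show "Fu h \<subseteq> convex hull (nu ` {D \<in> AO. supp_c E (d h) \<subseteq> D})" .
qed

end



context gr begin

lemma adj_sub: "(u,w) \<in> adj S \<Longrightarrow> u \<in> S \<and> w \<in> S"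
  by (auto simp: adj_in_def)

lemma adj_sym: "(u,w) \<in> adj S \<Longrightarrow> (w,u) \<in> adj S"
  unfolding adj_in_def by blast

lemma adj_restrict: "(u,w) \<in> adj S \<Longrightarrow> u \<in> T \<Longrightarrow> w \<in> T \<Longrightarrow> (u,w) \<in> adj T"
  unfolding adj_in_def by blast

lemma rt_sym: "(u,w) \<in> (adj S)\<^sup>* \<Longrightarrow> (w,u) \<in> (adj S)\<^sup>*"
proof (induction rule: rtrancl_induct)
  case base then show ?case by simp
next
  case (step y z)
  show ?case by (rule converse_rtrancl_into_rtrancl[OF adj_sym[OF step(2)] step(3)])
qed

lemma rt_in: "(u,w) \<in> (adj S)\<^sup>* \<Longrightarrow> u \<in> S \<Longrightarrow> w \<in> S"
proof (induction rule: rtrancl_induct)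
  case base then show ?case by simp
next
  case (step y z) then show ?case using adj_sub by blast
qed

lemma rt_comp:
  assumes s: "s \<in> S" and p: "(s,v) \<in> (adj S)\<^sup>*"
  shows "(s,v) \<in> (adj {w\<in>S. (s,w) \<in> (adj S)\<^sup>*})\<^sup>*"
  using p
proof (induction rule: rtrancl_induct)
  case base then show ?case by simp
next
  case (step y z)
  have yS: "y \<in> S" using rt_in[OF step(1) s] .
  have zS: "z \<in> S" using adj_sub[OF step(2)] by blast
  have sz: "(s,z) \<in> (adj S)\<^sup>*" using step(1) step(2) by (rule rtrancl_into_rtrancl)
  have yC: "y \<in> {w\<in>S. (s,w) \<in> (adj S)\<^sup>*}" using yS step(1) by simp
  have zC: "z \<in> {w\<in>S. (s,w) \<in> (adj S)\<^sup>*}" using zS sz by simp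
  have "(y,z) \<in> adj {w\<in>S. (s,w) \<in> (adj S)\<^sup>*}" by (rule adj_restrict[OF step(2) yC zC])
  then show ?case by (rule rtrancl_into_rtrancl[OF step(3)])
qed

lemma rt_mono: "S \<subseteq> T \<Longrightarrow> (u,w) \<in> (adj S)\<^sup>* \<Longrightarrow> (u,w) \<in> (adj T)\<^sup>*"
proof -
  assume ST: "S \<subseteq> T" and uw: "(u,w) \<in> (adj S)\<^sup>*"
  have sub: "adj S \<subseteq> adj T"
  proof (rule subsetI)
    fix p assume p: "p \<in> adj S"
    obtain a b where ab: "p = (a,b)" by (cases p)
    have "a \<in> S" "b \<in> S" using adj_sub[of a b S] p ab by auto
    then have "a \<in> T" "b \<in> T" using ST by auto
    then have "(a,b) \<in> adj T" using adj_restrict[of a b S T] p ab by simp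
    then show "p \<in> adj T" using ab by simp
  qed
  show ?thesis using rtrancl_mono[OF sub] uw by (rule subsetD)
qed

lemma ncomp_one:
  assumes ne: "S \<noteq> {}" and c: "\<forall>x\<in>S. \<forall>y\<in>S. (x,y) \<in> (adj S)\<^sup>*"
  shows "num_components E hde tle S = 1"
proof -
  have cl: "(adj S)\<^sup>* `` {x} = S" if x: "x \<in> S" for x
  proof
    show "(adj S)\<^sup>* `` {x} \<subseteq> S"
    proof
      fix y assume "y \<in> (adj S)\<^sup>* `` {x}"
      then have "(x,y) \<in> (adj S)\<^sup>*" by simp
      then show "y \<in> S" using rt_in x by blast
    qed
    show "S \<subseteq> (adj S)\<^sup>* `` {x}"
    proof
      fix y assume "y \<in> S"
      then have "(x,y) \<in> (adj S)\<^sup>*" using c x by blast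
      then show "y \<in> (adj S)\<^sup>* `` {x}" by simp
    qed
  qed
  have "S // (adj S)\<^sup>* = (\<Union>x\<in>S. {(adj S)\<^sup>* `` {x}})" by (simp add: quotient_def)
  also have "\<dots> = (\<Union>x\<in>S. {S})" using cl by simp
  also have "\<dots> = {S}" using ne by blast
  finally show ?thesis by (simp add: num_components_def)
qed

lemma conn_all: "x \<in> V \<Longrightarrow> y \<in> V \<Longrightarrow> (x,y) \<in> (adj V)\<^sup>*"
proof -
  assume x: "x \<in> V" and y: "y \<in> V"
  have "num_components E hde tle V = 1" using conn by (simp only: connected_graph_def)
  then have "card (V // (adj V)\<^sup>*) = 1" by (simp only: num_components_def)
  then obtain X where X: "V // (adj V)\<^sup>* = {X}" by (rule card_1_singletonE)
  have "(adj V)\<^sup>* `` {x} \<in> {X}" using quotientI[OF x, of "(adj V)\<^sup>*"] X by simp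
  moreover have "(adj V)\<^sup>* `` {y} \<in> {X}" using quotientI[OF y, of "(adj V)\<^sup>*"] X by simp
  ultimately have eq: "(adj V)\<^sup>* `` {x} = (adj V)\<^sup>* `` {y}" by simp
  have "y \<in> (adj V)\<^sup>* `` {y}" by simp
  then have "y \<in> (adj V)\<^sup>* `` {x}" by (simp only: eq)
  then show ?thesis by simp
qed

lemma bond:
  fixes h :: "'v \<Rightarrow> real"
  assumes oeE: "fst oe \<in> E" and lt: "h (otl hde tle oe) < h (ohd hde tle oe)"
  shows "\<exists>C. C \<subseteq> V \<and> kappa V E hde tle C = 1 \<and> ohd hde tle oe \<in> C \<and> otl hde tle oe \<notin> C \<and>
     (\<forall>e\<in>E. (hde e \<in> C \<and> tle e \<notin> C \<longrightarrow> h (tle e) < h (hde e)) \<and>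
            (tle e \<in> C \<and> hde e \<notin> C \<longrightarrow> h (hde e) < h (tle e)))"
proof -
  define s where "s = ohd hde tle oe"
  define t where "t = otl hde tle oe"
  have sV: "s \<in> V" and tV: "t \<in> V" using endsV[OF oeE] unfolding s_def t_def ohd_def otl_def by auto
  have hts: "h t < h s" using lt by (simp add: s_def t_def)
  define C0 where "C0 = {v\<in>V. h s \<le> h v}"
  define A where "A = {v\<in>V - C0. (t,v) \<in> (adj (V - C0))\<^sup>*}"
  define C1 where "C1 = V - A"
  define C2 where "C2 = {v\<in>C1. (s,v) \<in> (adj C1)\<^sup>*}"
  have tC0: "t \<notin> C0" using hts by (simp add: C0_def not_le)
  have tA: "t \<in> A" using tV tC0 by (simp add: A_def)
  have sC1: "s \<in> C1" using sV by (auto simp: C1_def A_def C0_def)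
  have sC2: "s \<in> C2" using sC1 by (simp add: C2_def)
  have C2C1: "C2 \<subseteq> C1" by (auto simp: C2_def)
  have C2V: "C2 \<subseteq> V" using C2C1 by (auto simp: C1_def)
  have AV: "A \<subseteq> V - C0" by (auto simp: A_def)
  have tC2: "t \<notin> C2" using tA C2C1 by (auto simp: C1_def)
  have P: "q \<in> A \<and> p \<in> C0" if p: "p \<in> C2" and q: "q \<in> V" "q \<notin> C2" and pq: "(p,q) \<in> adj V" for p q
  proof -
    have pC1: "p \<in> C1" using p C2C1 by blast
    have qA: "q \<in> A"
    proof (rule ccontr)
      assume "q \<notin> A"
      then have qC1: "q \<in> C1" using q by (simp add: C1_def)
      have "(p,q) \<in> adj C1" by (rule adj_restrict[OF pq pC1 qC1])
      moreover have "(s,p) \<in> (adj C1)\<^sup>*" using p by (simp add: C2_def)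
      ultimately have "(s,q) \<in> (adj C1)\<^sup>*" by (simp add: rtrancl_into_rtrancl)
      then show False using q qC1 by (simp add: C2_def)
    qed
    have pC0: "p \<in> C0"
    proof (rule ccontr)
      assume pn: "p \<notin> C0"
      have pV: "p \<in> V" using adj_sub[OF pq] by blast
      have qVC0: "q \<in> V - C0" using qA AV by blast
      have pVC0: "p \<in> V - C0" using pV pn by simp
      have "(q,p) \<in> adj (V - C0)" by (rule adj_restrict[OF adj_sym[OF pq] qVC0 pVC0])
      moreover have "(t,q) \<in> (adj (V - C0))\<^sup>*" using qA by (simp add: A_def)
      ultimately have "(t,p) \<in> (adj (V - C0))\<^sup>*" by (simp add: rtrancl_into_rtrancl)
      then have "p \<in> A" using pV pn by (simp add: A_def)
      then show False using pC1 by (simp add: C1_def)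
    qed
    show ?thesis using qA pC0 by blast
  qed
  have Pe: "h q < h p" if p: "p \<in> C2" and q: "q \<in> V" "q \<notin> C2" and pq: "(p,q) \<in> adj V" for p q
  proof -
    have "q \<in> A \<and> p \<in> C0" by (rule P[OF p q pq])
    then show ?thesis using AV by (auto simp: C0_def)
  qed
  have edge: "\<forall>e\<in>E. (hde e \<in> C2 \<and> tle e \<notin> C2 \<longrightarrow> h (tle e) < h (hde e)) \<and>
            (tle e \<in> C2 \<and> hde e \<notin> C2 \<longrightarrow> h (hde e) < h (tle e))"
  proof (intro ballI conjI impI)
    fix e assume e: "e \<in> E"
    have ends: "hde e \<in> V" "tle e \<in> V" using endsV[OF e] by auto
    have a1: "(hde e, tle e) \<in> adj V" "(tle e, hde e) \<in> adj V"
      using e ends unfolding adj_in_def by blast+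
    show "h (tle e) < h (hde e)" if "hde e \<in> C2 \<and> tle e \<notin> C2"
      using Pe[of "hde e" "tle e"] that ends a1 by blast
    show "h (hde e) < h (tle e)" if "tle e \<in> C2 \<and> hde e \<notin> C2"
      using Pe[of "tle e" "hde e"] that ends a1 by blast
  qed
  have conn2: "num_components E hde tle C2 = 1"
  proof (rule ncomp_one)
    show "C2 \<noteq> {}" using sC2 by blast
    have r: "(s,v) \<in> (adj C2)\<^sup>*" if "v \<in> C2" for v
      using rt_comp[OF sC1, of v] that unfolding C2_def by blast
    show "\<forall>x\<in>C2. \<forall>y\<in>C2. (x, y) \<in> (adj C2)\<^sup>*"
    proof (intro ballI)
      fix x y assume "x \<in> C2" "y \<in> C2"
      then show "(x, y) \<in> (adj C2)\<^sup>*" using rtrancl_trans[OF rt_sym[OF r[of x]] r[of y]] by blast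
    qed
  qed
  have AC2: "A \<subseteq> V - C2" using C2C1 by (auto simp: C1_def A_def)
  have Q: "w \<in> C2 \<or> (t,w) \<in> (adj (V - C2))\<^sup>*" if "(t,w) \<in> (adj V)\<^sup>*" for w
    using that
  proof (induction rule: rtrancl_induct)
    case base then show ?case by simp
  next
    case (step w x)
    show ?case
    proof (cases "x \<in> C2")
      case True then show ?thesis by simp
    next
      case xn: False
      have wV: "w \<in> V" and xV: "x \<in> V" using adj_sub[OF step(2)] by auto
      show ?thesis
      proof (cases "w \<in> C2")
        case True
        have "x \<in> A" using P[OF True xV xn step(2)] by blast
        then have "(t,x) \<in> (adj (V - C0))\<^sup>*" by (simp add: A_def)
        have tVC0: "t \<in> V - C0" using tA AV by blast
        have "(t,x) \<in> (adj A)\<^sup>*" unfolding A_def by (rule rt_comp[OF tVC0 \<open>(t,x) \<in> (adj (V - C0))\<^sup>*\<close>])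
        then have "(t,x) \<in> (adj (V - C2))\<^sup>*" by (rule rt_mono[OF AC2])
        then show ?thesis by blast
      next
        case False
        then have "(t,w) \<in> (adj (V - C2))\<^sup>*" using step(3) by blast
        moreover have "w \<in> V - C2" "x \<in> V - C2" using wV xV False xn by simp_all
        then have "(w,x) \<in> adj (V - C2)" by (intro adj_restrict[OF step(2)])
        ultimately show ?thesis by (simp add: rtrancl_into_rtrancl)
      qed
    qed
  qed
  have conn3: "num_components E hde tle (V - C2) = 1"
  proof (rule ncomp_one)
    show "V - C2 \<noteq> {}" using tV tC2 by blast
    have r: "(t,w) \<in> (adj (V - C2))\<^sup>*" if "w \<in> V - C2" for w
      using Q[OF conn_all[OF tV, of w]] that by blast
    show "\<forall>x\<in>V - C2. \<forall>y\<in>V - C2. (x, y) \<in> (adj (V - C2))\<^sup>*"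
    proof (intro ballI)
      fix x y assume "x \<in> V - C2" "y \<in> V - C2"
      then show "(x, y) \<in> (adj (V - C2))\<^sup>*" using rtrancl_trans[OF rt_sym[OF r[of x]] r[of y]] by blast
    qed
  qed
  have "kappa V E hde tle C2 = 1" using conn2 conn3 by (simp add: kappa_def)
  then show ?thesis using C2V sC2 tC2 edge unfolding s_def t_def by blast
qed

end



context gr begin

lemma supp_pos: "e \<in> E \<Longrightarrow> (e,True) \<in> supp_c E x \<longleftrightarrow> x $ e > 0"
  by (simp add: supp_c_def oriented_edges_def oval_def)
lemma supp_neg: "e \<in> E \<Longrightarrow> (e,False) \<in> supp_c E x \<longleftrightarrow> x $ e < 0"
  by (auto simp: supp_c_def oriented_edges_def oval_def)

lemma pert:
  fixes h :: "'v \<Rightarrow> real"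
  assumes sub: "supp_c E (d (chi C)) \<subseteq> supp_c E (d h)"
  shows "Fu h \<subseteq> Klam V E hde tle (d (chi C))"
proof
  fix x assume x: "x \<in> Fu h"
  then have xV: "x \<in> VC" and xe: "d h \<bullet> x = SS h / 2" by (auto simp: Fu_def)
  define l where "l = d (chi C)"
  have sgn: "(l $ e > 0 \<longrightarrow> d h $ e > 0) \<and> (l $ e < 0 \<longrightarrow> d h $ e < 0)" if e: "e \<in> E" for e
  proof -
    have "(l $ e > 0 \<longrightarrow> (e,True) \<in> supp_c E (d h)) \<and> (l $ e < 0 \<longrightarrow> (e,False) \<in> supp_c E (d h))"
      using sub e unfolding supp_d_iff l_def by blast
    then show ?thesis using supp_pos[OF e] supp_neg[OF e] by blast
  qed
  define M where "M = insert 1 ((\<lambda>e. \<bar>d h $ e\<bar>) ` {e\<in>E. d h $ e \<noteq> 0})"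
  have finM: "finite M" using finE by (simp add: M_def)
  define \<epsilon> where "\<epsilon> = Min M"
  have epos: "0 < \<epsilon>" unfolding \<epsilon>_def using finM by (auto simp: M_def Min_gr_iff)
  have ele: "\<epsilon> \<le> \<bar>d h $ e\<bar>" if "e \<in> E" "d h $ e \<noteq> 0" for e
    unfolding \<epsilon>_def using finM that by (intro Min_le) (auto simp: M_def)
  have lval: "l $ e = 0 \<or> l $ e = 1 \<or> l $ e = -1" for e by (simp add: l_def d_comp chi_def)
  define h' where "h' = (\<lambda>v. h v - \<epsilon> * chi C v)"
  have dh': "d h' = d h - \<epsilon> *\<^sub>R l" by (simp add: vec_eq_iff d_comp h'_def l_def algebra_simps)
  have edge: "\<bar>d h' $ e\<bar> = \<bar>d h $ e\<bar> - \<epsilon> * \<bar>l $ e\<bar>" if e: "e \<in> E" for e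
  proof -
    consider "l $ e = 0" | "l $ e = 1" | "l $ e = -1" using lval by blast
    then show ?thesis
    proof cases
      case 1 then show ?thesis by (simp add: dh')
    next
      case 2
      have p: "d h $ e > 0" using sgn[OF e] 2 by simp
      then have "\<epsilon> \<le> d h $ e" using ele[OF e] by simp
      then show ?thesis using 2 p by (simp add: dh')
    next
      case 3
      have p: "d h $ e < 0" using sgn[OF e] 3 by simp
      then have "\<epsilon> \<le> - d h $ e" using ele[OF e] by simp
      then show ?thesis using 3 p by (simp add: dh')
    qed
  qed
  have SS': "SS h' = SS h - \<epsilon> * (\<Sum>e\<in>E. \<bar>l $ e\<bar>)"
    unfolding SS_def by (simp add: edge sum_subtractf sum_distrib_left)
  have "d h' \<bullet> x \<le> SS h' / 2" by (rule VC_le[OF xV])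
  moreover have "d h' \<bullet> x = d h \<bullet> x - \<epsilon> * (l \<bullet> x)" by (simp add: dh' inner_diff_left)
  ultimately have "\<epsilon> * (\<Sum>e\<in>E. \<bar>l $ e\<bar>) \<le> \<epsilon> * (2 * (l \<bullet> x))" using xe SS' by linarith
  then have ge: "(\<Sum>e\<in>E. \<bar>l $ e\<bar>) \<le> 2 * (l \<bullet> x)" using epos by simp
  have le: "2 * (x \<bullet> l) \<le> (\<Sum>e\<in>E. \<bar>l $ e\<bar>)" unfolding l_def by (rule cut_ineq[OF xV])
  have "2 * inner_c E x l = qf E l"
    using ge le by (simp add: l_def inner_c_d qf_chi inner_commute)
  moreover have "x \<in> KK" using xV VC_sub_K by blast
  ultimately show "x \<in> Klam V E hde tle (d (chi C))" by (simp add: Klam_def l_def)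
qed

lemma phi_Fu:
  fixes h :: "'v \<Rightarrow> real"
  shows "phi_c V E hde tle (Fu h) = supp_c E (d h)"
proof
  show "supp_c E (d h) \<subseteq> phi_c V E hde tle (Fu h)"
  proof
    fix oe assume oe: "oe \<in> supp_c E (d h)"
    then obtain e b where eb: "oe = (e,b)" "e \<in> E" "oval (d h) (e,b) > 0"
      by (cases oe) (auto simp: supp_c_def oriented_edges_def)
    have lt: "h (otl hde tle (e,b)) < h (ohd hde tle (e,b))" using eb oval_d[of "(e,b)" h] by simp
    obtain C where C: "C \<subseteq> V" "kappa V E hde tle C = 1" "ohd hde tle (e,b) \<in> C" "otl hde tle (e,b) \<notin> C"
      and ed: "\<forall>e\<in>E. (hde e \<in> C \<and> tle e \<notin> C \<longrightarrow> h (tle e) < h (hde e)) \<and>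
            (tle e \<in> C \<and> hde e \<notin> C \<longrightarrow> h (hde e) < h (tle e))"
      using bond[of "(e,b)" h] eb lt by auto
    have U: "d (chi C) \<in> Upsilon1 V E hde tle" using C unfolding Upsilon1_def by blast
    have "oval (d (chi C)) (e,b) = chi C (ohd hde tle (e,b)) - chi C (otl hde tle (e,b))"
      using eb oval_d[of "(e,b)" "chi C"] by simp
    then have in1: "oe \<in> supp_c E (d (chi C))" using C eb
      by (simp add: chi_def supp_c_def oriented_edges_def)
    have "supp_c E (d (chi C)) \<subseteq> supp_c E (d h)"
    proof
      fix oe' assume oe': "oe' \<in> supp_c E (d (chi C))"
      then obtain e' b' where eb': "oe' = (e',b')" "e' \<in> E" "oval (d (chi C)) (e',b') > 0"
        by (cases oe') (auto simp: supp_c_def oriented_edges_def)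
      then have "chi C (ohd hde tle (e',b')) - chi C (otl hde tle (e',b')) > 0"
        using oval_d[of "(e',b')" "chi C"] by simp
      then have io: "ohd hde tle (e',b') \<in> C" "otl hde tle (e',b') \<notin> C"
        by (auto simp: chi_def split: if_splits)
      have "h (otl hde tle (e',b')) < h (ohd hde tle (e',b'))"
        using ed eb'(2) io by (cases b') auto
      then have "oval (d h) (e',b') > 0" using oval_d[of "(e',b')" h] eb' by simp
      then show "oe' \<in> supp_c E (d h)" using eb' by (simp add: supp_c_def oriented_edges_def)
    qed
    then have "Fu h \<subseteq> Klam V E hde tle (d (chi C))" by (rule pert)
    then show "oe \<in> phi_c V E hde tle (Fu h)" unfolding phi_c_def using U in1 by blast
  qed
next
  show "phi_c V E hde tle (Fu h) \<subseteq> supp_c E (d h)"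
  proof
    fix oe assume "oe \<in> phi_c V E hde tle (Fu h)"
    then obtain lam where lam: "lam \<in> Upsilon1 V E hde tle" "Fu h \<subseteq> Klam V E hde tle lam"
      "oe \<in> supp_c E lam" unfolding phi_c_def by blast
    then obtain C where C: "lam = d (chi C)" unfolding Upsilon1_def by blast
    obtain e b where eb: "oe = (e,b)" "e \<in> E" "oval lam (e,b) > 0"
      using lam(3) by (cases oe) (auto simp: supp_c_def oriented_edges_def)
    show "oe \<in> supp_c E (d h)"
    proof (rule ccontr)
      assume ns: "oe \<notin> supp_c E (d h)"
      then have "oval (d h) (e,b) \<le> 0" using eb by (simp add: supp_c_def oriented_edges_def)
      then have ge: "0 \<le> oval (d h) (e, \<not>b)" by (simp add: oval_neg)
      have nl: "hde e \<noteq> tle e"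
      proof
        assume "hde e = tle e"
        then have "lam $ e = 0" using C eb by (simp add: d_comp)
        then show False using eb by (cases b) (simp_all add: oval_def)
      qed
      obtain D where D: "D \<in> AO" "supp_c E (d h) \<subseteq> D" "(e, \<not>b) \<in> D"
        using exists_AO[of h "(e, \<not>b)"] eb nl ge by auto
      have "nu D \<in> Fu h" using nu_Fu_iff[OF D(1)] D(2) by blast
      then have "nu D \<in> Klam V E hde tle lam" using lam(2) by blast
      then have "2 * inner_c E (nu D) lam = qf E lam" by (simp add: Klam_def)
      then have "2 * (wD D \<bullet> d (chi C)) = (\<Sum>e\<in>E. \<bar>d (chi C) $ e\<bar>)"
        by (simp add: C inner_c_d qf_chi nu_d)
      then have "supp_c E (d (chi C)) \<subseteq> D" using W_eq[OF D(1)] by blast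
      then have "(e,b) \<in> D" using lam(3) C eb by blast
      then show False using D(3) AO_or[OF D(1) eb(2) nl] by (cases b) auto
    qed
  qed
qed

end



context gr begin

lemma rank_lt:
  fixes h :: "'v \<Rightarrow> real"
  assumes u: "u \<in> V" and w: "w \<in> V"
  shows "card {r\<in>h`V. r < h u} < card {r\<in>h`V. r < h w} \<longleftrightarrow> h u < h w"
proof
  assume lt: "h u < h w"
  have "{r\<in>h`V. r < h u} \<subset> {r\<in>h`V. r < h w}" using lt u by auto
  then show "card {r\<in>h`V. r < h u} < card {r\<in>h`V. r < h w}"
    by (rule psubset_card_mono[rotated]) (simp add: finV)
next
  assume c: "card {r\<in>h`V. r < h u} < card {r\<in>h`V. r < h w}"
  show "h u < h w"
  proof (rule ccontr)
    assume "\<not> h u < h w"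
    then have "{r\<in>h`V. r < h w} \<subseteq> {r\<in>h`V. r < h u}" by auto
    then have "card {r\<in>h`V. r < h w} \<le> card {r\<in>h`V. r < h u}"
      by (rule card_mono[rotated]) (simp add: finV)
    then show False using c by simp
  qed
qed

lemma coherent_supp:
  fixes h :: "'v \<Rightarrow> real"
  shows "coherent_cut_orientation V E hde tle (supp_c E (d h))"
proof -
  define p where "p v = card {r\<in>h`V. r < h v}" for v
  have "supp_c E (d h) = {oe \<in> oriented_edges E. p (otl hde tle oe) < p (ohd hde tle oe)}"
  proof (rule set_eqI)
    fix oe
    show "oe \<in> supp_c E (d h) \<longleftrightarrow> oe \<in> {oe \<in> oriented_edges E. p (otl hde tle oe) < p (ohd hde tle oe)}"
    proof (cases "oe \<in> oriented_edges E")
      case True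
      then have e: "fst oe \<in> E" by (auto simp: oriented_edges_def)
      have V2: "otl hde tle oe \<in> V" "ohd hde tle oe \<in> V" using endsV[OF e] by (auto simp: otl_def ohd_def)
      have "oe \<in> supp_c E (d h) \<longleftrightarrow> h (otl hde tle oe) < h (ohd hde tle oe)"
        using True oval_d[OF e, of h] by (simp add: supp_c_def)
      also have "\<dots> \<longleftrightarrow> p (otl hde tle oe) < p (ohd hde tle oe)"
        unfolding p_def using rank_lt[OF V2] by simp
      finally show ?thesis using True by simp
    next
      case False
      then show ?thesis by (simp add: supp_c_def)
    qed
  qed
  then show ?thesis unfolding coherent_cut_orientation_def by blast
qed

lemma nu_extreme: "D \<in> AO \<Longrightarrow> nu D extreme_point_of VC"
proof -
  assume D: "D \<in> AO"
  obtain h where h: "supp_c E (d h) = D" using AO_supp[OF D] by blast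
  have "{D' \<in> AO. supp_c E (d h) \<subseteq> D'} = {D}" using AO_sub_eq[OF D] D h by auto
  then have "Fu h = {nu D}" using Fu_hull[of h] by simp
  then have "{nu D} face_of VC" using Fu_face[of h] by simp
  then show ?thesis by (simp add: face_of_singleton)
qed

lemma nu_bij: "bij_betw nu AO {v. v extreme_point_of VC}"
proof (rule bij_betw_imageI)
  show "inj_on nu AO"
  proof (rule inj_onI)
    fix D1 D2 assume D1: "D1 \<in> AO" and D2: "D2 \<in> AO" and eq: "nu D1 = nu D2"
    obtain h where h: "supp_c E (d h) = D1" using AO_supp[OF D1] by blast
    have "nu D1 \<in> Fu h" using nu_Fu_iff[OF D1] h by blast
    then have "nu D2 \<in> Fu h" using eq by simp
    then have "D1 \<subseteq> D2" using nu_Fu_iff[OF D2] h by blast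
    then show "D1 = D2" by (rule AO_sub_eq[OF D1 D2])
  qed
next
  show "nu ` AO = {v. v extreme_point_of VC}"
    using nu_extreme extreme_nu by blast
qed

end

theorem mainTheorem18:
  fixes V :: "'v set" and E :: "'e::finite set" and hde tle :: "'e \<Rightarrow> 'v"
  assumes "is_graph V E hde tle"
    and "connected_graph V E hde tle"
  shows
    "(\<forall>F. F face_of VcO V E hde tle \<and> F \<noteq> {} \<longrightarrow>
          coherent_cut_orientation V E hde tle (phi_c V E hde tle F))
     \<and> inj_on (phi_c V E hde tle) {F. F face_of VcO V E hde tle \<and> F \<noteq> {}}
     \<and> (\<forall>F1 F2. F1 face_of VcO V E hde tle \<and> F1 \<noteq> {} \<and> F2 face_of VcO V E hde tle \<and> F2 \<noteq> {}
           \<and> F1 \<subseteq> F2 \<longrightarrow> phi_c V E hde tle F2 \<subseteq> phi_c V E hde tle F1)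
     \<and> (\<exists>\<nu>. bij_betw \<nu> (acyclic_orientations E hde tle) {v. v extreme_point_of VcO V E hde tle}
          \<and> (\<forall>F. F face_of VcO V E hde tle \<and> F \<noteq> {} \<longrightarrow>
                F = convex hull (\<nu> ` {D \<in> acyclic_orientations E hde tle. phi_c V E hde tle F \<subseteq> D})))"
proof -
  interpret G: gr V E hde tle by unfold_locales (rule assms)+
  have P1: "\<forall>F. F face_of VcO V E hde tle \<and> F \<noteq> {} \<longrightarrow>
          coherent_cut_orientation V E hde tle (phi_c V E hde tle F)"
  proof (intro allI impI)
    fix F assume F: "F face_of VcO V E hde tle \<and> F \<noteq> {}"
    then obtain h where h: "F = G.Fu h" using G.face_Fu by blast
    show "coherent_cut_orientation V E hde tle (phi_c V E hde tle F)"
      using G.coherent_supp[of h] by (simp add: h G.phi_Fu)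
  qed
  have P2: "inj_on (phi_c V E hde tle) {F. F face_of VcO V E hde tle \<and> F \<noteq> {}}"
  proof (rule inj_onI)
    fix F1 F2 assume F1: "F1 \<in> {F. F face_of VcO V E hde tle \<and> F \<noteq> {}}"
      and F2: "F2 \<in> {F. F face_of VcO V E hde tle \<and> F \<noteq> {}}"
      and eq: "phi_c V E hde tle F1 = phi_c V E hde tle F2"
    obtain h1 where h1: "F1 = G.Fu h1" using G.face_Fu F1 by blast
    obtain h2 where h2: "F2 = G.Fu h2" using G.face_Fu F2 by blast
    have "cobd E hde tle h1 = cobd E hde tle h1" by simp
    have s: "supp_c E (cobd E hde tle h1) = supp_c E (cobd E hde tle h2)"
      using eq by (simp add: h1 h2 G.phi_Fu)
    show "F1 = F2" unfolding h1 h2 G.Fu_hull s ..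
  qed
  have P3: "\<forall>F1 F2. F1 face_of VcO V E hde tle \<and> F1 \<noteq> {} \<and> F2 face_of VcO V E hde tle \<and> F2 \<noteq> {}
           \<and> F1 \<subseteq> F2 \<longrightarrow> phi_c V E hde tle F2 \<subseteq> phi_c V E hde tle F1"
    unfolding phi_c_def by blast
  have P4: "\<forall>F. F face_of VcO V E hde tle \<and> F \<noteq> {} \<longrightarrow>
                F = convex hull (G.nu ` {D \<in> acyclic_orientations E hde tle. phi_c V E hde tle F \<subseteq> D})"
  proof (intro allI impI)
    fix F assume F: "F face_of VcO V E hde tle \<and> F \<noteq> {}"
    then obtain h where h: "F = G.Fu h" using G.face_Fu by blast
    show "F = convex hull (G.nu ` {D \<in> acyclic_orientations E hde tle. phi_c V E hde tle F \<subseteq> D})"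
      unfolding h G.phi_Fu by (rule G.Fu_hull)
  qed
  show ?thesis using P1 P2 P3 P4 G.nu_bij by blast
qed



end
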